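(* For every $\varepsilon\in(0,1)$ and $\ell\in\mathbb{N}$ there is $d_0=d_0(\varepsilon,\ell)$ such that for every $m\in\mathbb{N}$ and every time series $x\in\mathbb{R}^m$ there exists a time series $y\in\mathbb{R}^{d_0}$ such that for every $z\in\mathbb{R}^\ell$, \[(1-\varepsilon)\,d_{dF}(x,z)\le d_{dF}(y,z)\le(1+\varepsilon)\,d_{dF}(x,z).\]
   Context: A time series of complexity $m$ is a vector $x=(x_1,\dots,x_m)\in\mathbb{R}^m$. For $x\in\mathbb{R}^m$ and $y\in\mathbb{R}^\ell$, a traversal is a sequence of index pairs $(i,j)\in[m]\times[\ell]$ starting at $(1,1)$, ending at $(m,\ell)$, in which each pair $(i,j)$ is followed by one of $(i,j+1)$, $(i+1,j)$, $(i+1,j+1)$. The discrete Fréchet distance $d_{dF}(x,y)$ is the minimum over all traversals $T$ of $\max_{(i,j)\in T}|x_i-y_j|$. *)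

theory Defs
  imports Complex_Main
begin

text \<open>Time series of complexity m are real lists of length m, indexed 0..m-1
  (the paper's index i corresponds to list position i-1).\<close>

definition traversal :: "nat \<Rightarrow> nat \<Rightarrow> (nat \<times> nat) list \<Rightarrow> bool" where
  "traversal m l T \<longleftrightarrow>
     T \<noteq> [] \<and> hd T = (0, 0) \<and> last T = (m - 1, l - 1) \<and>
     (\<forall>k. Suc k < length T \<longrightarrow>
        (let (i, j) = T ! k in
          T ! Suc k \<in> {(i, Suc j), (Suc i, j), (Suc i, Suc j)}))"

definition trav_cost :: "real list \<Rightarrow> real list \<Rightarrow> (nat \<times> nat) list \<Rightarrow> real" where
  "trav_cost x y T = Max ((\<lambda>(i, j). \<bar>x ! i - y ! j\<bar>) ` set T)"

definition ddF :: "real list \<Rightarrow> real list \<Rightarrow> real" where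
  "ddF x y = Min {trav_cost x y T | T. traversal (length x) (length y) T}"

end

theory Submission
  imports Defs
begin

definition stepok :: "(nat \<times> nat) list \<Rightarrow> bool" where
 "stepok T \<longleftrightarrow> (\<forall>k. Suc k < length T \<longrightarrow> (let (i, j) = T ! k in T ! Suc k \<in> {(i, Suc j), (Suc i, j), (Suc i, Suc j)}))"

lemma traversal_alt: "traversal m l T \<longleftrightarrow> T \<noteq> [] \<and> hd T = (0,0) \<and> last T = (m-1,l-1) \<and> stepok T"
  unfolding traversal_def stepok_def by simp

lemma stepokD: "stepok T \<Longrightarrow> Suc k < length T \<Longrightarrow>
   T!Suc k \<in> {(fst (T!k), Suc (snd (T!k))), (Suc (fst (T!k)), snd (T!k)), (Suc (fst (T!k)), Suc (snd (T!k)))}"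
  unfolding stepok_def by (auto simp: Let_def split: prod.splits)

lemma step_props: assumes "stepok T" "Suc k < length T"
  shows "fst (T!k) \<le> fst (T!Suc k) \<and> fst (T!Suc k) \<le> Suc (fst (T!k)) \<and>
         snd (T!k) \<le> snd (T!Suc k) \<and> snd (T!Suc k) \<le> Suc (snd (T!k)) \<and>
         fst (T!k) + snd (T!k) < fst (T!Suc k) + snd (T!Suc k)"
  using stepokD[OF assms] by auto

lemma mono_trav: assumes "stepok T" "k' < length T"
  shows "k \<le> k' \<Longrightarrow> fst (T!k) \<le> fst (T!k') \<and> snd (T!k) \<le> snd (T!k')"
  using assms(2)
proof (induction k')
  case 0 then show ?case by simp
next
  case (Suc k')
  show ?case
  proof (cases "k = Suc k'")
    case True then show ?thesis by simp
  next
    case False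
    then have "k \<le> k'" using Suc by simp
    with Suc have "fst (T!k) \<le> fst (T!k') \<and> snd (T!k) \<le> snd (T!k')" by simp
    with step_props[OF assms(1) Suc.prems(2)] show ?thesis by linarith
  qed
qed

lemma sum_trav: assumes "stepok T" "hd T = (0,0)" "k < length T"
  shows "k \<le> fst (T!k) + snd (T!k)"
  using assms(3)
proof (induction k)
  case 0 then show ?case by simp
next
  case (Suc k)
  with step_props[OF assms(1) Suc.prems] show ?case by simp
qed

lemma trav_bounds: assumes "traversal m l T" "p \<in> set T" "1 \<le> m" "1 \<le> l"
  shows "fst p < m \<and> snd p < l"
proof -
  from assms(2) obtain k where k: "k < length T" "p = T!k" by (auto simp: in_set_conv_nth)
  have st: "stepok T" and ne: "T \<noteq> []" and la: "last T = (m-1,l-1)" using assms(1) by (auto simp: traversal_alt)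
  have "last T = T!(length T - 1)" using ne by (simp add: last_conv_nth)
  with mono_trav[OF st, of "length T - 1" k] k la ne
  have "fst (T!k) \<le> m-1 \<and> snd (T!k) \<le> l-1" by auto
  with k assms(3,4) show ?thesis by auto
qed

lemma trav_len: assumes "traversal m l T" "1 \<le> m" "1 \<le> l"
  shows "length T \<le> m + l"
proof -
  have st: "stepok T" and ne: "T \<noteq> []" and la: "last T = (m-1,l-1)" and h: "hd T = (0,0)"
    using assms(1) by (auto simp: traversal_alt)
  have "last T = T!(length T - 1)" using ne by (simp add: last_conv_nth)
  with sum_trav[OF st h, of "length T - 1"] ne la have "length T - 1 \<le> (m-1) + (l-1)" by auto
  moreover have "length T > 0" using ne by simp
  ultimately show ?thesis using assms(2,3) by linarith
qed

lemma trav_cover_fst: assumes "traversal m l T" "i < m"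
  shows "\<exists>j. (i,j) \<in> set T"
proof -
  have st: "stepok T" and ne: "T \<noteq> []" and la: "last T = (m-1,l-1)" and h: "hd T = (0,0)"
    using assms(1) by (auto simp: traversal_alt)
  have "\<forall>i \<le> fst (T!k). \<exists>j. (i,j) \<in> set T" if "k < length T" for k
    using that
  proof (induction k)
    case 0
    then have "T!0 = (0,0)" using h ne by (simp add: hd_conv_nth)
    then show ?case using 0 by (metis fst_conv le_zero_eq nth_mem)
  next
    case (Suc k)
    have "T!Suc k \<in> set T" using Suc.prems by simp
    show ?case
    proof (intro allI impI)
      fix i assume i: "i \<le> fst (T!Suc k)"
      show "\<exists>j. (i,j) \<in> set T"
      proof (cases "i \<le> fst (T!k)")
        case True then show ?thesis using Suc by simp
      next
        case False
        then have "i = fst (T!Suc k)" using i step_props[OF st Suc.prems] by simp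
        then have "(i, snd (T!Suc k)) \<in> set T" using \<open>T!Suc k \<in> set T\<close> by simp
        then show ?thesis by blast
      qed
    qed
  qed
  from this[of "length T - 1"] ne la assms(2) show ?thesis by (simp add: last_conv_nth)
qed

lemma trav_cover_snd: assumes "traversal m l T" "j < l"
  shows "\<exists>i. (i,j) \<in> set T"
proof -
  have st: "stepok T" and ne: "T \<noteq> []" and la: "last T = (m-1,l-1)" and h: "hd T = (0,0)"
    using assms(1) by (auto simp: traversal_alt)
  have "\<forall>j \<le> snd (T!k). \<exists>i. (i,j) \<in> set T" if "k < length T" for k
    using that
  proof (induction k)
    case 0
    then have "T!0 = (0,0)" using h ne by (simp add: hd_conv_nth)
    then show ?case using 0 by (metis snd_conv le_zero_eq nth_mem)
  next
    case (Suc k)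
    have "T!Suc k \<in> set T" using Suc.prems by simp
    show ?case
    proof (intro allI impI)
      fix j assume j: "j \<le> snd (T!Suc k)"
      show "\<exists>i. (i,j) \<in> set T"
      proof (cases "j \<le> snd (T!k)")
        case True then show ?thesis using Suc by simp
      next
        case False
        then have "j = snd (T!Suc k)" using j step_props[OF st Suc.prems] by simp
        then have "(fst (T!Suc k), j) \<in> set T" using \<open>T!Suc k \<in> set T\<close> by simp
        then show ?thesis by blast
      qed
    qed
  qed
  from this[of "length T - 1"] ne la assms(2) show ?thesis by (simp add: last_conv_nth)
qed

lemma finite_trav: assumes "1 \<le> m" "1 \<le> l" shows "finite {T. traversal m l T}"
proof -
  have "{T. traversal m l T} \<subseteq> {T. set T \<subseteq> {..<m} \<times> {..<l} \<and> length T \<le> m + l}"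
    using trav_bounds[OF _ _ assms] trav_len[OF _ assms] by fastforce
  moreover have "finite {T. set T \<subseteq> {..<m} \<times> {..<l} \<and> length T \<le> m + l}"
    by (rule finite_lists_length_le) simp
  ultimately show ?thesis by (rule finite_subset)
qed


inductive reach :: "real list \<Rightarrow> real list \<Rightarrow> real \<Rightarrow> nat \<Rightarrow> nat \<Rightarrow> bool" for x z r where
  r0: "\<bar>x!0 - z!0\<bar> \<le> r \<Longrightarrow> reach x z r 0 0"
| rR: "reach x z r i j \<Longrightarrow> Suc j < length z \<Longrightarrow> \<bar>x!i - z!Suc j\<bar> \<le> r \<Longrightarrow> reach x z r i (Suc j)"
| rD: "reach x z r i j \<Longrightarrow> Suc i < length x \<Longrightarrow> \<bar>x!Suc i - z!j\<bar> \<le> r \<Longrightarrow> reach x z r (Suc i) j"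
| rB: "reach x z r i j \<Longrightarrow> Suc i < length x \<Longrightarrow> Suc j < length z \<Longrightarrow> \<bar>x!Suc i - z!Suc j\<bar> \<le> r \<Longrightarrow> reach x z r (Suc i) (Suc j)"

lemma stepok_snoc: assumes "T \<noteq> []" "stepok T" "last T = (i,j)" "q \<in> {(i, Suc j), (Suc i, j), (Suc i, Suc j)}"
  shows "stepok (T @ [q])"
  unfolding stepok_def
proof (intro allI impI)
  fix k assume k: "Suc k < length (T @ [q])"
  show "let (i, j) = (T @ [q]) ! k in (T @ [q]) ! Suc k \<in> {(i, Suc j), (Suc i, j), (Suc i, Suc j)}"
  proof (cases "Suc k < length T")
    case True
    then show ?thesis using assms(2) unfolding stepok_def by (simp add: nth_append)
  next
    case False
    then have "k = length T - 1" "Suc k = length T" using k assms(1) by auto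
    moreover have "T ! (length T - 1) = (i,j)" using assms(1,3) by (simp add: last_conv_nth)
    ultimately show ?thesis using assms(4) by (simp add: nth_append)
  qed
qed

lemma reach_bounds: "reach x z r i j \<Longrightarrow> x \<noteq> [] \<Longrightarrow> z \<noteq> [] \<Longrightarrow> i < length x \<and> j < length z"
  by (induction rule: reach.induct) auto

lemma reach_path: "reach x z r i j \<Longrightarrow> \<exists>T. T \<noteq> [] \<and> hd T = (0,0) \<and> last T = (i,j) \<and> stepok T \<and>
    (\<forall>(a,b) \<in> set T. \<bar>x!a - z!b\<bar> \<le> r)"
proof (induction rule: reach.induct)
  case r0
  then show ?case by (intro exI[of _ "[(0,0)]"]) (auto simp: stepok_def)
next
  case (rR i j)
  then obtain T where T: "T \<noteq> []" "hd T = (0,0)" "last T = (i,j)" "stepok T" "\<forall>(a,b) \<in> set T. \<bar>x!a - z!b\<bar> \<le> r" by blast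
  show ?case using T rR stepok_snoc[OF T(1,4,3), of "(i, Suc j)"] by (intro exI[of _ "T @ [(i, Suc j)]"]) auto
next
  case (rD i j)
  then obtain T where T: "T \<noteq> []" "hd T = (0,0)" "last T = (i,j)" "stepok T" "\<forall>(a,b) \<in> set T. \<bar>x!a - z!b\<bar> \<le> r" by blast
  show ?case using T rD stepok_snoc[OF T(1,4,3), of "(Suc i, j)"] by (intro exI[of _ "T @ [(Suc i, j)]"]) auto
next
  case (rB i j)
  then obtain T where T: "T \<noteq> []" "hd T = (0,0)" "last T = (i,j)" "stepok T" "\<forall>(a,b) \<in> set T. \<bar>x!a - z!b\<bar> \<le> r" by blast
  show ?case using T rB stepok_snoc[OF T(1,4,3), of "(Suc i, Suc j)"] by (intro exI[of _ "T @ [(Suc i, Suc j)]"]) auto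
qed

lemma trav_reach:
  assumes "traversal (length x) (length z) T" "x \<noteq> []" "z \<noteq> []" "\<forall>(a,b) \<in> set T. \<bar>x!a - z!b\<bar> \<le> r"
  shows "reach x z r (length x - 1) (length z - 1)"
proof -
  have st: "stepok T" and ne: "T \<noteq> []" and la: "last T = (length x-1,length z-1)" and h: "hd T = (0,0)"
    using assms(1) by (auto simp: traversal_alt)
  have bd: "fst p < length x \<and> snd p < length z" if "p \<in> set T" for p
    using trav_bounds[OF assms(1) that] assms(2,3) by (auto simp: Suc_le_eq)
  have "reach x z r (fst (T!k)) (snd (T!k))" if "k < length T" for k
    using that
  proof (induction k)
    case 0
    then have "T!0 = (0,0)" using h ne by (simp add: hd_conv_nth)
    moreover have "T!0 \<in> set T" using 0 by simp
    ultimately show ?case using assms(4) by (auto intro: r0)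
  next
    case (Suc k)
    have IH: "reach x z r (fst (T!k)) (snd (T!k))" using Suc by simp
    have mem: "T!Suc k \<in> set T" using Suc.prems by simp
    then have c: "\<bar>x!fst (T!Suc k) - z!snd (T!Suc k)\<bar> \<le> r" using assms(4) by (auto split: prod.splits)
    have b: "fst (T!Suc k) < length x" "snd (T!Suc k) < length z" using bd[OF mem] by auto
    from stepokD[OF st Suc.prems] consider
        "T!Suc k = (fst (T!k), Suc (snd (T!k)))" | "T!Suc k = (Suc (fst (T!k)), snd (T!k))"
      | "T!Suc k = (Suc (fst (T!k)), Suc (snd (T!k)))" by auto
    then show ?case
    proof cases
      case 1 then show ?thesis using IH c b by (auto intro: rR)
    next
      case 2 then show ?thesis using IH c b by (auto intro: rD)
    next
      case 3 then show ?thesis using IH c b by (auto intro: rB)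
    qed
  qed
  from this[of "length T - 1"] ne la show ?thesis by (simp add: last_conv_nth)
qed

lemma trav_cost_le: assumes "T \<noteq> []" "\<forall>(a,b) \<in> set T. \<bar>x!a - z!b\<bar> \<le> r"
  shows "trav_cost x z T \<le> r"
  unfolding trav_cost_def using assms by (subst Max_le_iff) auto

lemma trav_cost_ge: assumes "(a,b) \<in> set T"
  shows "\<bar>x!a - z!b\<bar> \<le> trav_cost x z T"
  unfolding trav_cost_def using assms by (intro Max_ge) force+

lemma reach_exists: assumes "x \<noteq> []" "z \<noteq> []"
  shows "\<exists>r. reach x z r (length x - 1) (length z - 1)"
proof -
  define r where "r = (\<Sum>i<length x. \<Sum>j<length z. \<bar>x!i - z!j\<bar>)"
  have rb: "\<bar>x!i - z!j\<bar> \<le> r" if "i < length x" "j < length z" for i j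
  proof -
    have "\<bar>x!i - z!j\<bar> \<le> (\<Sum>j<length z. \<bar>x!i - z!j\<bar>)"
      using that by (intro member_le_sum) auto
    also have "\<dots> \<le> r" unfolding r_def using that
      by (intro member_le_sum[where f="\<lambda>i. \<Sum>j<length z. \<bar>x!i - z!j\<bar>"]) (auto intro: sum_nonneg)
    finally show ?thesis .
  qed
  have "reach x z r i 0" if "i < length x" for i
    using that
  proof (induction i)
    case 0 then show ?case using rb assms by (auto intro: r0)
  next
    case (Suc i) then show ?case using rb assms by (auto intro: rD)
  qed
  then have "reach x z r (length x - 1) j" if "j < length z" for j
    using that
  proof (induction j)
    case 0 then show ?case using assms by simp
  next
    case (Suc j) then show ?case using rb assms by (auto intro: rR)
  qed
  moreover have "length z - 1 < length z" using assms by simp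
  ultimately show ?thesis by blast
qed

lemma trav_set_props: assumes "x \<noteq> []" "z \<noteq> []"
  shows "finite {trav_cost x z T | T. traversal (length x) (length z) T}"
    "{trav_cost x z T | T. traversal (length x) (length z) T} \<noteq> {}"
proof -
  have "finite {T. traversal (length x) (length z) T}" using assms by (intro finite_trav) (auto simp: Suc_le_eq)
  then show "finite {trav_cost x z T | T. traversal (length x) (length z) T}"
    by (simp add: setcompr_eq_image)
  obtain r where "reach x z r (length x - 1) (length z - 1)" using reach_exists[OF assms] by blast
  from reach_path[OF this] obtain T where "T \<noteq> [] \<and> hd T = (0,0) \<and> last T = (length x - 1, length z - 1) \<and> stepok T"
    by blast
  then have "traversal (length x) (length z) T" by (simp add: traversal_alt)
  then show "{trav_cost x z T | T. traversal (length x) (length z) T} \<noteq> {}" by blast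
qed

lemma ddF_le_iff: assumes "x \<noteq> []" "z \<noteq> []"
  shows "ddF x z \<le> r \<longleftrightarrow> reach x z r (length x - 1) (length z - 1)"
proof
  assume "ddF x z \<le> r"
  then obtain T where T: "traversal (length x) (length z) T" "trav_cost x z T \<le> r"
    unfolding ddF_def using trav_set_props[OF assms] by (auto simp: Min_le_iff)
  have "\<forall>(a,b) \<in> set T. \<bar>x!a - z!b\<bar> \<le> r"
    using order_trans[OF trav_cost_ge T(2)] by blast
  then show "reach x z r (length x - 1) (length z - 1)" using trav_reach[OF T(1) assms] by blast
next
  assume "reach x z r (length x - 1) (length z - 1)"
  from reach_path[OF this] obtain T where T: "T \<noteq> []" "hd T = (0,0)" "last T = (length x - 1, length z - 1)" "stepok T"
    "\<forall>(a,b) \<in> set T. \<bar>x!a - z!b\<bar> \<le> r" by blast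
  then have tr: "traversal (length x) (length z) T" by (simp add: traversal_alt)
  have "ddF x z \<le> trav_cost x z T"
    unfolding ddF_def using trav_set_props[OF assms] tr by (intro Min_le) auto
  also have "\<dots> \<le> r" using trav_cost_le T by blast
  finally show "ddF x z \<le> r" .
qed


definition st0 :: "nat \<Rightarrow> (real \<Rightarrow> nat \<Rightarrow> bool) \<Rightarrow> real \<Rightarrow> nat set" where
  "st0 l P c = {j. j < l \<and> (\<forall>t\<le>j. P c t)}"

definition stS :: "nat \<Rightarrow> (real \<Rightarrow> nat \<Rightarrow> bool) \<Rightarrow> nat set \<Rightarrow> real \<Rightarrow> nat set" where
  "stS l P S c = {j. j < l \<and> (\<exists>p\<le>j. (p \<in> S \<or> (0 < p \<and> p - 1 \<in> S)) \<and> (\<forall>t. p \<le> t \<and> t \<le> j \<longrightarrow> P c t))}"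

fun sts :: "nat \<Rightarrow> (real \<Rightarrow> nat \<Rightarrow> bool) \<Rightarrow> real list \<Rightarrow> nat set" where
  "sts l P [] = {}"
| "sts l P (c # cs) = fold (\<lambda>c S. stS l P S c) cs (st0 l P c)"

lemma sts_append: "u \<noteq> [] \<Longrightarrow> sts l P (u @ v) = fold (\<lambda>c S. stS l P S c) v (sts l P u)"
  by (cases u) auto

lemma sts_snoc: "u \<noteq> [] \<Longrightarrow> sts l P (u @ [c]) = stS l P (sts l P u) c"
  by (simp add: sts_append)

lemma sts_sub: "sts l P u \<subseteq> {..<l}"
proof (induction u rule: rev_induct)
  case Nil then show ?case by simp
next
  case (snoc c u)
  then show ?case
    by (cases "u = []") (auto simp: sts_snoc st0_def stS_def)
qed

lemma stS_cong: assumes "\<forall>t<l. P c t = Q c t" shows "stS l P S c = stS l Q S c"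
proof -
  have "(\<forall>t. p \<le> t \<and> t \<le> j \<longrightarrow> P c t) = (\<forall>t. p \<le> t \<and> t \<le> j \<longrightarrow> Q c t)" if "j < l" for j p
  proof -
    have "\<forall>t. t \<le> j \<longrightarrow> P c t = Q c t" using assms that by auto
    then show ?thesis by blast
  qed
  then show ?thesis unfolding stS_def by blast
qed

lemma sts_cong: "(\<forall>c\<in>set u. \<forall>t<l. P c t = Q c t) \<Longrightarrow> sts l P u = sts l Q u"
proof (induction u rule: rev_induct)
  case Nil then show ?case by simp
next
  case (snoc c u)
  have c: "\<forall>t<l. P c t = Q c t" using snoc.prems by simp
  show ?case
  proof (cases "u = []")
    case True
    then show ?thesis using c by (auto simp: st0_def)
  next
    case False
    then have "sts l P u = sts l Q u" using snoc by simp
    then show ?thesis using False c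
      by (simp add: sts_snoc stS_cong)
  qed
qed

lemma stS_idem: "stS l P (stS l P S c) c = stS l P S c"
proof
  show "stS l P (stS l P S c) c \<subseteq> stS l P S c"
  proof
    fix j assume "j \<in> stS l P (stS l P S c) c"
    then obtain p where p: "j < l" "p \<le> j" "p \<in> stS l P S c \<or> (0 < p \<and> p - 1 \<in> stS l P S c)"
      "\<forall>t. p \<le> t \<and> t \<le> j \<longrightarrow> P c t" unfolding stS_def by blast
    from p(3) show "j \<in> stS l P S c"
    proof
      assume "p \<in> stS l P S c"
      then obtain q where q: "q \<le> p" "q \<in> S \<or> (0 < q \<and> q - 1 \<in> S)" "\<forall>t. q \<le> t \<and> t \<le> p \<longrightarrow> P c t"
        unfolding stS_def by blast
      have all: "\<forall>t. q \<le> t \<and> t \<le> j \<longrightarrow> P c t" using q(3) p(4) by (meson nat_le_linear)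
      have "q \<le> j" using q(1) p(2) by simp
      then show ?thesis unfolding stS_def using p(1) q(2) all by blast
    next
      assume a: "0 < p \<and> p - 1 \<in> stS l P S c"
      then obtain q where q: "q \<le> p - 1" "q \<in> S \<or> (0 < q \<and> q - 1 \<in> S)" "\<forall>t. q \<le> t \<and> t \<le> p - 1 \<longrightarrow> P c t"
        unfolding stS_def by blast
      have "\<forall>t. q \<le> t \<and> t \<le> j \<longrightarrow> P c t"
      proof (intro allI impI)
        fix t assume "q \<le> t \<and> t \<le> j"
        then show "P c t" using q(3) p(4) a by (cases "t \<le> p - 1") auto
      qed
      moreover have "q \<le> j" using q(1) p(2) by simp
      ultimately show ?thesis unfolding stS_def using p(1) q(2) by blast
    qed
  qed
next
  show "stS l P S c \<subseteq> stS l P (stS l P S c) c"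
  proof
    fix j assume j: "j \<in> stS l P S c"
    then have "P c j" "j < l" unfolding stS_def by auto
    then show "j \<in> stS l P (stS l P S c) c" using j unfolding stS_def[of l P "stS l P S c"] by auto
  qed
qed

lemma st0_idem: "stS l P (st0 l P c) c = st0 l P c"
proof
  show "stS l P (st0 l P c) c \<subseteq> st0 l P c"
  proof
    fix j assume "j \<in> stS l P (st0 l P c) c"
    then obtain p where p: "j < l" "p \<le> j" "p \<in> st0 l P c \<or> (0 < p \<and> p - 1 \<in> st0 l P c)"
      "\<forall>t. p \<le> t \<and> t \<le> j \<longrightarrow> P c t" unfolding stS_def by blast
    have "\<forall>t\<le>j. P c t"
    proof (intro allI impI)
      fix t assume t: "t \<le> j"
      show "P c t"
      proof (cases "p \<le> t")
        case True then show ?thesis using p(4) t by auto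
      next
        case False
        then show ?thesis using p(3) unfolding st0_def by auto
      qed
    qed
    then show "j \<in> st0 l P c" using p unfolding st0_def by auto
  qed
next
  show "st0 l P c \<subseteq> stS l P (st0 l P c) c"
  proof
    fix j assume j: "j \<in> st0 l P c"
    then have "P c j" "j < l" unfolding st0_def by auto
    then show "j \<in> stS l P (st0 l P c) c" using j unfolding stS_def by auto
  qed
qed

lemma sts_last_idem: "u \<noteq> [] \<Longrightarrow> stS l P (sts l P u) (last u) = sts l P u"
proof -
  assume "u \<noteq> []"
  then obtain v c where u: "u = v @ [c]" by (metis append_butlast_last_id)
  show ?thesis
  proof (cases "v = []")
    case True then show ?thesis using u by (simp add: st0_idem)
  next
    case False then show ?thesis using u by (simp add: sts_snoc stS_idem)
  qed
qed

lemma sts_stutter: "u \<noteq> [] \<Longrightarrow> sts l P (u @ replicate n (last u)) = sts l P u"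
proof (induction n)
  case 0 then show ?case by simp
next
  case (Suc n)
  have "u @ replicate (Suc n) (last u) = (u @ replicate n (last u)) @ [last u]"
    by (simp add: replicate_append_same)
  then have "sts l P (u @ replicate (Suc n) (last u)) = stS l P (sts l P (u @ replicate n (last u))) (last u)"
    using Suc.prems by (simp add: sts_snoc del: append_assoc replicate.simps)
  then show ?case using Suc by (simp add: sts_last_idem)
qed

lemma sts_take_Suc: assumes "i < length x"
  shows "sts l P (take (Suc i) x) = (if i = 0 then st0 l P (x!0) else stS l P (sts l P (take i x)) (x!i))"
proof -
  have "take (Suc i) x = take i x @ [x!i]" using assms by (simp add: take_Suc_conv_app_nth)
  show ?thesis
  proof (cases "i = 0")
    case True then show ?thesis using assms by (cases x) auto
  next
    case False
    then have "take i x \<noteq> []" using assms by (cases x) auto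
    then show ?thesis using False \<open>take (Suc i) x = take i x @ [x!i]\<close> by (simp add: sts_snoc)
  qed
qed

lemma reach_ext: assumes "reach x z r i p" "p \<le> j" "j < length z"
    "\<forall>t. p \<le> t \<and> t \<le> j \<longrightarrow> \<bar>x!i - z!t\<bar> \<le> r"
  shows "reach x z r i j"
  using assms(2,3,4)
proof (induction j)
  case 0 then show ?case using assms(1) by simp
next
  case (Suc j)
  show ?case
  proof (cases "p = Suc j")
    case True then show ?thesis using assms(1) by simp
  next
    case False
    then have "reach x z r i j" using Suc by auto
    then show ?thesis using Suc by (auto intro: rR)
  qed
qed

lemma reach_sts:
  assumes "x \<noteq> []" "z \<noteq> []" "i < length x" "j < length z"
  shows "reach x z r i j \<longleftrightarrow> j \<in> sts (length z) (\<lambda>c t. \<bar>c - z!t\<bar> \<le> r) (take (Suc i) x)"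
proof
  let ?P = "\<lambda>c t. \<bar>c - z!t\<bar> \<le> r"
  let ?l = "length z"
  assume "reach x z r i j"
  then show "j \<in> sts ?l ?P (take (Suc i) x)"
  proof (induction rule: reach.induct)
    case r0
    then show ?case using assms by (cases x) (auto simp: st0_def)
  next
    case (rR i j)
    have il: "i < length x" using reach_bounds[OF rR.hyps(1) assms(1,2)] by simp
    show ?case
    proof (cases "i = 0")
      case True
      then show ?thesis using rR sts_take_Suc[OF il, of ?l ?P] unfolding st0_def
        by (auto simp: le_Suc_eq)
    next
      case False
      then show ?thesis using rR sts_take_Suc[OF il, of ?l ?P] unfolding stS_def
        by (auto simp: le_Suc_eq)
    qed
  next
    case (rD i j)
    have jl: "j < length z" using reach_bounds[OF rD.hyps(1) assms(1,2)] by simp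
    show ?case using rD jl sts_take_Suc[OF rD.hyps(2), of ?l ?P] unfolding stS_def by auto
  next
    case (rB i j)
    show ?case using rB sts_take_Suc[OF rB.hyps(2), of ?l ?P] unfolding stS_def
      by (auto intro!: exI[of _ "Suc j"])
  qed
next
  let ?P = "\<lambda>c t. \<bar>c - z!t\<bar> \<le> r"
  let ?l = "length z"
  show "j \<in> sts ?l ?P (take (Suc i) x) \<Longrightarrow> reach x z r i j"
    using assms(3,4)
  proof (induction i arbitrary: j)
    case 0
    then have all: "\<forall>t\<le>j. ?P (x!0) t" using sts_take_Suc[of 0 x ?l ?P] by (simp add: st0_def)
    have "reach x z r 0 0" using all by (auto intro: r0)
    then show ?case using reach_ext[of x z r 0 0 j] all 0 by auto
  next
    case (Suc i)
    then have "j \<in> stS ?l ?P (sts ?l ?P (take (Suc i) x)) (x!Suc i)"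
      using sts_take_Suc[OF Suc.prems(2), of ?l ?P] by simp
    then obtain p where p: "p \<le> j" "p \<in> sts ?l ?P (take (Suc i) x) \<or> (0 < p \<and> p - 1 \<in> sts ?l ?P (take (Suc i) x))"
      "\<forall>t. p \<le> t \<and> t \<le> j \<longrightarrow> ?P (x!Suc i) t" unfolding stS_def by blast
    have rp: "reach x z r (Suc i) p"
      using p(2)
    proof
      assume "p \<in> sts ?l ?P (take (Suc i) x)"
      then have "reach x z r i p" using Suc p by auto
      then show ?thesis using p Suc.prems by (auto intro: rD)
    next
      assume a: "0 < p \<and> p - 1 \<in> sts ?l ?P (take (Suc i) x)"
      then have "reach x z r i (p - 1)" using Suc p by auto
      then have "reach x z r (Suc i) (Suc (p - 1))" using p Suc.prems a by (intro rB) auto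
      then show ?thesis using a by simp
    qed
    show ?case using reach_ext[OF rp p(1) Suc.prems(3) p(3)] .
  qed
qed

lemma ddF_le_sts: assumes "x \<noteq> []" "z \<noteq> []"
  shows "ddF x z \<le> r \<longleftrightarrow> length z - 1 \<in> sts (length z) (\<lambda>c t. \<bar>c - z!t\<bar> \<le> r) x"
  using ddF_le_iff[OF assms] reach_sts[OF assms, of "length x - 1" "length z - 1" r] assms by simp


definition sig :: "nat \<Rightarrow> real set \<Rightarrow> real list \<Rightarrow> (((real \<times> nat) set) \<times> nat) set" where
  "sig l V u = {(B, j). B \<subseteq> V \<times> {..<l} \<and> j \<in> sts l (\<lambda>c t. (c,t) \<in> B) u}"

lemma sig_sub: "sig l V u \<subseteq> Pow (V \<times> {..<l}) \<times> {..<l}"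
  using sts_sub unfolding sig_def by blast

lemma sig_eqD: assumes "sig l V u = sig l V u'" "B \<subseteq> V \<times> {..<l}"
  shows "sts l (\<lambda>c t. (c,t) \<in> B) u = sts l (\<lambda>c t. (c,t) \<in> B) u'"
proof -
  have "j \<in> sts l (\<lambda>c t. (c,t) \<in> B) u \<longleftrightarrow> (B, j) \<in> sig l V u" for u j
    using assms(2) unfolding sig_def by blast
  then show ?thesis using assms(1) by blast
qed

lemma sig_append: assumes "u \<noteq> []" "u' \<noteq> []" "sig l V u = sig l V u'"
  shows "sig l V (u @ v) = sig l V (u' @ v)"
proof -
  have "sts l (\<lambda>c t. (c,t) \<in> B) (u @ v) = sts l (\<lambda>c t. (c,t) \<in> B) (u' @ v)" if "B \<subseteq> V \<times> {..<l}" for B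
    using sig_eqD[OF assms(3) that] assms(1,2) by (simp add: sts_append)
  then show ?thesis unfolding sig_def by blast
qed

lemma card_sigspace: "finite V \<Longrightarrow> card (Pow (Pow (V \<times> {..<l}) \<times> {..<l})) = 2 ^ (2 ^ (card V * l) * l)"
  by (simp add: card_Pow card_cartesian_product)

lemma shorten:
  assumes "finite V"
  shows "set x \<subseteq> V \<Longrightarrow> x \<noteq> [] \<Longrightarrow> \<exists>y. y \<noteq> [] \<and> set y \<subseteq> V \<and> length y \<le> 2 ^ (2 ^ (card V * l) * l) \<and> sig l V y = sig l V x"
proof (induction "length x" arbitrary: x rule: less_induct)
  case less
  define N where "N = (2::nat) ^ (2 ^ (card V * l) * l)"
  show ?case
  proof (cases "length x \<le> N")
    case True then show ?thesis using less.prems unfolding N_def by blast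
  next
    case False
    define f where "f k = sig l V (take (Suc k) x)" for k
    have sub: "f ` {..N} \<subseteq> Pow (Pow (V \<times> {..<l}) \<times> {..<l})" unfolding f_def using sig_sub by blast
    have "card (f ` {..N}) \<le> N"
      using card_mono[OF _ sub] card_sigspace[OF assms, of l] assms unfolding N_def by simp
    then have "card (f ` {..N}) < card {..N}" by simp
    then have "\<not> inj_on f {..N}" by (rule pigeonhole)
    then obtain k1 k2 where kk: "k1 \<le> N" "k2 \<le> N" "k1 \<noteq> k2" "f k1 = f k2"
      unfolding inj_on_def by auto
    obtain k k' where k: "k < k'" "k' \<le> N" "f k = f k'"
    proof (cases "k1 < k2")
      case True then show ?thesis by (rule that[of k1 k2]) (use kk in auto)
    next
      case False
      then have "k2 < k1" using kk(3) by simp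
      then show ?thesis by (rule that[of k2 k1]) (use kk in auto)
    qed
    define v where "v = drop (Suc k') x"
    define x' where "x' = take (Suc k) x @ v"
    have kl: "Suc k' \<le> length x" using k False by simp
    have xeq: "x = take (Suc k') x @ v" unfolding v_def by simp
    have ne1: "take (Suc k) x \<noteq> []" "take (Suc k') x \<noteq> []" using kl less.prems(2) by auto
    have "sig l V x' = sig l V x"
      unfolding x'_def using sig_append[OF ne1 k(3)[unfolded f_def], of v] xeq by simp
    moreover have "length x' < length x" unfolding x'_def v_def using k kl by simp
    moreover have "set x' \<subseteq> V"
    proof -
      have "set (take (Suc k) x) \<subseteq> set x" by (rule set_take_subset)
      moreover have "set (drop (Suc k') x) \<subseteq> set x" by (rule set_drop_subset)
      ultimately show ?thesis using less.prems(1) by (auto simp: x'_def v_def)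
    qed
    moreover have "x' \<noteq> []" unfolding x'_def using ne1 by simp
    ultimately show ?thesis using less.hyps[of x'] by auto
  qed
qed

lemma sig_sts: assumes "set u \<subseteq> V" "set u' \<subseteq> V" "sig l V u = sig l V u'"
  shows "sts l P u = sts l P u'"
proof -
  define B where "B = {(c,t). c \<in> V \<and> t < l \<and> P c t}"
  have B: "B \<subseteq> V \<times> {..<l}" unfolding B_def by auto
  have "sts l P u = sts l (\<lambda>c t. (c,t) \<in> B) u" using assms(1) unfolding B_def by (intro sts_cong) auto
  also have "\<dots> = sts l (\<lambda>c t. (c,t) \<in> B) u'" using sig_eqD[OF assms(3) B] .
  also have "\<dots> = sts l P u'" using assms(2) unfolding B_def by (intro sts_cong) auto
  finally show ?thesis .
qed

lemma reduce:
  assumes "finite V" "set x \<subseteq> V" "x \<noteq> []" "card V \<le> K"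
  shows "\<exists>y. length y = 2 ^ (2 ^ (K * l) * l) \<and> y \<noteq> [] \<and> (\<forall>P. sts l P y = sts l P x)"
proof -
  obtain y where y: "y \<noteq> []" "set y \<subseteq> V" "length y \<le> 2 ^ (2 ^ (card V * l) * l)" "sig l V y = sig l V x"
    using shorten[OF assms(1-3)] by blast
  have "(2::nat) ^ (2 ^ (card V * l) * l) \<le> 2 ^ (2 ^ (K * l) * l)"
    using assms(4) by (intro power_increasing mult_le_mono1) auto
  then have ly: "length y \<le> 2 ^ (2 ^ (K * l) * l)" using y(3) by linarith
  define y' where "y' = y @ replicate (2 ^ (2 ^ (K * l) * l) - length y) (last y)"
  have "length y' = 2 ^ (2 ^ (K * l) * l)" unfolding y'_def using ly by simp
  moreover have "y' \<noteq> []" unfolding y'_def using y by simp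
  moreover have "sts l P y' = sts l P x" for P
    unfolding y'_def using sts_stutter[OF y(1)] sig_sts[OF y(2) assms(2) y(4)] by simp
  ultimately show ?thesis by blast
qed

lemma ddF_eq_sts: assumes "x \<noteq> []" "y \<noteq> []" "z \<noteq> []" "\<forall>P. sts (length z) P y = sts (length z) P x"
  shows "ddF y z = ddF x z"
proof -
  have "ddF y z \<le> r \<longleftrightarrow> ddF x z \<le> r" for r
    using ddF_le_sts[OF assms(1,3)] ddF_le_sts[OF assms(2,3)] assms(4) by simp
  then show ?thesis by (meson order_antisym order_refl)
qed


lemma ddF_attained: assumes "x \<noteq> []" "z \<noteq> []"
  shows "\<exists>T. traversal (length x) (length z) T \<and> trav_cost x z T = ddF x z"
proof -
  have "ddF x z \<in> {trav_cost x z T | T. traversal (length x) (length z) T}"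
    unfolding ddF_def using trav_set_props[OF assms] by (rule Min_in)
  then show ?thesis by auto
qed

lemma ddF_perturb: assumes "x \<noteq> []" "z \<noteq> []" "length x' = length x"
    "\<forall>i<length x. \<bar>x!i - x'!i\<bar> \<le> \<eta>"
  shows "ddF x' z \<le> ddF x z + \<eta>"
proof -
  obtain T where T: "traversal (length x) (length z) T" "trav_cost x z T = ddF x z"
    using ddF_attained[OF assms(1,2)] by blast
  have "\<bar>x'!a - z!b\<bar> \<le> ddF x z + \<eta>" if "(a,b) \<in> set T" for a b
  proof -
    have "a < length x" using trav_bounds[OF T(1) that] assms(1,2) by (auto simp: Suc_le_eq)
    then have "\<bar>x!a - x'!a\<bar> \<le> \<eta>" using assms(4) by blast
    moreover have "\<bar>x!a - z!b\<bar> \<le> ddF x z" using trav_cost_ge[OF that, of x z] T(2) by simp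
    ultimately show ?thesis by linarith
  qed
  then have "\<forall>(a,b) \<in> set T. \<bar>x'!a - z!b\<bar> \<le> ddF x z + \<eta>" by blast
  moreover have x'ne: "x' \<noteq> []" using assms(1,3) by auto
  moreover have "traversal (length x') (length z) T" using T(1) assms(3) by simp
  ultimately have "reach x' z (ddF x z + \<eta>) (length x' - 1) (length z - 1)"
    using trav_reach assms(2) by blast
  then show ?thesis using ddF_le_iff[OF x'ne assms(2)] by blast
qed

definition wdiam :: "real list \<Rightarrow> (nat \<times> nat) list \<Rightarrow> real" where
  "wdiam x T = Max ((\<lambda>(p,q). \<bar>x!fst p - x!fst q\<bar>) ` {(p,q). p \<in> set T \<and> q \<in> set T \<and> snd p = snd q})"

lemma wdiam_fin: "finite {(p,q). p \<in> set T \<and> q \<in> set T \<and> snd p = snd q}"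
  by (rule finite_subset[of _ "set T \<times> set T"]) auto

lemma wdiam_ge: assumes "p \<in> set T" "q \<in> set T" "snd p = snd q"
  shows "\<bar>x!fst p - x!fst q\<bar> \<le> wdiam x T"
  unfolding wdiam_def using assms wdiam_fin by (intro Max_ge) auto

lemma wdiam_le: assumes "T \<noteq> []"
  shows "wdiam x T \<le> 2 * trav_cost x z T"
proof -
  have ne: "{(p,q). p \<in> set T \<and> q \<in> set T \<and> snd p = snd q} \<noteq> {}"
  proof -
    have "(hd T, hd T) \<in> {(p,q). p \<in> set T \<and> q \<in> set T \<and> snd p = snd q}" using assms by simp
    then show ?thesis by blast
  qed
  have "\<bar>x!fst p - x!fst q\<bar> \<le> 2 * trav_cost x z T" if "p \<in> set T" "q \<in> set T" "snd p = snd q" for p q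
  proof -
    have "\<bar>x!fst p - z!snd p\<bar> \<le> trav_cost x z T" using trav_cost_ge[of "fst p" "snd p" T x z] that by (cases p) simp
    moreover have "\<bar>x!fst q - z!snd p\<bar> \<le> trav_cost x z T" using trav_cost_ge[of "fst q" "snd q" T x z] that by (cases q) simp
    ultimately show ?thesis by linarith
  qed
  moreover have "finite ((\<lambda>(p,q). \<bar>x!fst p - x!fst q\<bar>) ` {(p,q). p \<in> set T \<and> q \<in> set T \<and> snd p = snd q})"
    using wdiam_fin by blast
  ultimately show ?thesis unfolding wdiam_def using ne by (subst Max_le_iff) auto
qed

lemma wdiam_nonneg: "T \<noteq> [] \<Longrightarrow> 0 \<le> wdiam x T"
  using wdiam_ge[of "hd T" T "hd T" x] by simp


theorem corollary4p7:
  fixes \<epsilon> :: real and l :: nat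
  assumes "0 < \<epsilon>" and "\<epsilon> < 1" and "1 \<le> l"
  shows "\<exists>d0 :: nat. \<forall>x :: real list. x \<noteq> [] \<longrightarrow>
           (\<exists>y :: real list. length y = d0 \<and>
              (\<forall>z :: real list. length z = l \<longrightarrow>
                 (1 - \<epsilon>) * ddF x z \<le> ddF y z \<and> ddF y z \<le> (1 + \<epsilon>) * ddF x z))"
proof -
  define M :: int where "M = \<lceil>2/\<epsilon>\<rceil> + 1"
  define K :: nat where "K = l * nat (2*M+1)"
  define N :: nat where "N = 2 ^ (2 ^ (K * l) * l)"
  show ?thesis
  proof (intro exI[of _ N] allI impI)
    fix x :: "real list" assume xne: "x \<noteq> []"
    define m where "m = length x"
    have m1: "1 \<le> m" using xne unfolding m_def by (cases x) auto
    define TT where "TT = {T. traversal m l T}"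
    have finTT: "finite TT" unfolding TT_def using finite_trav m1 assms(3) by blast
    have z0: "replicate l (0::real) \<noteq> []" "length (replicate l (0::real)) = l" using assms(3) by auto
    have neTT: "TT \<noteq> {}"
      using trav_set_props(2)[OF xne z0(1)] z0(2) unfolding TT_def m_def by auto
    define D where "D = Min (wdiam x ` TT)"
    have "D \<in> wdiam x ` TT" unfolding D_def using finTT neTT by (intro Min_in) auto
    then obtain Ts where Ts: "Ts \<in> TT" "wdiam x Ts = D" by auto
    have trTs: "traversal m l Ts" using Ts unfolding TT_def by simp
    have Tsne: "Ts \<noteq> []" using trTs by (simp add: traversal_alt)
    have Dle: "D \<le> 2 * ddF x z" if "length z = l" for z
    proof -
      have zne: "z \<noteq> []" using that assms(3) by auto
      obtain T where T: "traversal (length x) (length z) T" "trav_cost x z T = ddF x z"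
        using ddF_attained[OF xne zne] by blast
      have "T \<in> TT" using T(1) that unfolding TT_def m_def by simp
      then have "D \<le> wdiam x T" unfolding D_def using finTT by (intro Min_le) auto
      also have "\<dots> \<le> 2 * trav_cost x z T" using T(1) by (intro wdiam_le) (simp add: traversal_alt)
      finally show ?thesis using T(2) by simp
    qed
    have D0: "0 \<le> D" using wdiam_nonneg[OF Tsne, of x] Ts(2) by simp
    define \<eta> where "\<eta> = \<epsilon> * D / 2"
    have eta0: "0 \<le> \<eta>" unfolding \<eta>_def using D0 assms(1) by simp
    define J where "J i = (SOME j. (i,j) \<in> set Ts)" for i
    define I where "I j = (SOME i. (i,j) \<in> set Ts)" for j
    define A where "A i = x ! I (J i)" for i
    have J: "(i, J i) \<in> set Ts \<and> J i < l" if "i < m" for i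
    proof -
      have "\<exists>j. (i,j) \<in> set Ts" using trav_cover_fst[OF trTs that] .
      then have "(i, J i) \<in> set Ts" unfolding J_def by (rule someI_ex)
      then show ?thesis using trav_bounds[OF trTs _ m1 assms(3)] by force
    qed
    have IJ: "(I (J i), J i) \<in> set Ts" if "i < m" for i
    proof -
      have "\<exists>i'. (i', J i) \<in> set Ts" using J[OF that] by blast
      then show ?thesis unfolding I_def by (rule someI_ex)
    qed
    have Ad: "\<bar>x!i - A i\<bar> \<le> D" if "i < m" for i
      using wdiam_ge[OF J[OF that, THEN conjunct1] IJ[OF that], of x] Ts(2) unfolding A_def by simp
    define rnd where "rnd i = A i + \<eta> * of_int \<lfloor>(x!i - A i)/\<eta>\<rfloor>" for i
    define x' where "x' = map rnd [0..<m]"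
    have lx': "length x' = length x" unfolding x'_def m_def by simp
    have x'ne: "x' \<noteq> []" using lx' xne by auto
    have err: "\<bar>x!i - x'!i\<bar> \<le> \<eta>" and fl: "\<lfloor>(x!i - A i)/\<eta>\<rfloor> \<in> {-M..M}" if "i < m" for i
    proof -
      have x'i: "x'!i = rnd i" unfolding x'_def using that by simp
      have "\<bar>x!i - x'!i\<bar> \<le> \<eta> \<and> \<lfloor>(x!i - A i)/\<eta>\<rfloor> \<in> {-M..M}"
      proof (cases "\<eta> = 0")
        case True
        then have "D = 0" unfolding \<eta>_def using assms(1) by simp
        then have "x!i = A i" using Ad[OF that] by simp
        moreover have "(0::int) \<le> \<lceil>2/\<epsilon>\<rceil>"
        proof -
          have "0 < 2/\<epsilon>" using assms(1) by simp
          then show ?thesis using zero_le_ceiling[of "2/\<epsilon>"] by linarith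
        qed
        ultimately show ?thesis using True x'i unfolding rnd_def M_def by (simp del: zero_le_ceiling)
      next
        case False
        then have epos: "\<eta> > 0" using eta0 by simp
        define t where "t = (x!i - A i)/\<eta>"
        have wt: "x!i - A i = \<eta> * t" unfolding t_def using epos by simp
        have f1: "of_int \<lfloor>t\<rfloor> \<le> t" "t < of_int \<lfloor>t\<rfloor> + 1" by linarith+
        have g1: "\<eta> * of_int \<lfloor>t\<rfloor> \<le> \<eta> * t" using f1(1) epos by (intro mult_left_mono) auto
        have g2: "\<eta> * t < \<eta> * (of_int \<lfloor>t\<rfloor> + 1)" using f1(2) epos by (intro mult_strict_left_mono) auto
        have "x!i - x'!i = \<eta> * t - \<eta> * of_int \<lfloor>t\<rfloor>" using x'i wt unfolding rnd_def t_def by simp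
        then have e: "\<bar>x!i - x'!i\<bar> \<le> \<eta>" using g1 g2 by (simp add: algebra_simps)
        have Deq: "D = \<eta> * (2/\<epsilon>)" unfolding \<eta>_def using assms(1) by simp
        have "\<bar>\<eta> * t\<bar> \<le> \<eta> * (2/\<epsilon>)" using Ad[OF that] wt Deq by simp
        then have "\<eta> * \<bar>t\<bar> \<le> \<eta> * (2/\<epsilon>)" using epos by (simp add: abs_mult)
        then have at: "\<bar>t\<bar> \<le> 2/\<epsilon>" using epos mult_le_cancel_left_pos[of \<eta> "\<bar>t\<bar>" "2/\<epsilon>"] by linarith
        have a1: "\<lfloor>t\<rfloor> \<le> \<lfloor>2/\<epsilon>\<rfloor>" using at by (intro floor_mono) linarith
        have a2: "\<lfloor>2/\<epsilon>\<rfloor> \<le> \<lceil>2/\<epsilon>\<rceil>" by (rule floor_le_ceiling)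
        have a3: "\<lfloor>-(2/\<epsilon>)\<rfloor> \<le> \<lfloor>t\<rfloor>" using at by (intro floor_mono) linarith
        have a4: "\<lfloor>-(2/\<epsilon>)\<rfloor> = - \<lceil>2/\<epsilon>\<rceil>" by (simp add: ceiling_def)
        have b1: "\<lfloor>t\<rfloor> \<le> \<lceil>2/\<epsilon>\<rceil>" using a1 a2 by linarith
        have b2: "- \<lceil>2/\<epsilon>\<rceil> \<le> \<lfloor>t\<rfloor>" using a3 a4 by linarith
        from b1 b2 have "\<lfloor>t\<rfloor> \<in> {-M..M}" unfolding M_def by simp
        then show ?thesis using e unfolding t_def by simp
      qed
      then show "\<bar>x!i - x'!i\<bar> \<le> \<eta>" "\<lfloor>(x!i - A i)/\<eta>\<rfloor> \<in> {-M..M}" by auto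
    qed
    define Anc where "Anc = (\<lambda>j. x ! I j) ` {..<l}"
    define V where "V = (\<lambda>(a,k). a + \<eta> * of_int k) ` (Anc \<times> {-M..M})"
    have finV: "finite V" unfolding V_def Anc_def by simp
    have "card V \<le> card (Anc \<times> {-M..M})" unfolding V_def by (rule card_image_le) (simp add: Anc_def)
    also have "\<dots> = card Anc * card {-M..M}" by (rule card_cartesian_product)
    also have "\<dots> \<le> l * nat (2*M+1)"
    proof (intro mult_le_mono)
      show "card Anc \<le> l" unfolding Anc_def using card_image_le[of "{..<l}" "\<lambda>j. x ! I j"] by simp
      show "card {-M..M} \<le> nat (2*M+1)" by simp
    qed
    finally have cardV: "card V \<le> K" unfolding K_def .
    have x'V: "set x' \<subseteq> V"
    proof
      fix v assume "v \<in> set x'"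
      then obtain i where i: "i < m" "v = rnd i" unfolding x'_def by auto
      have "x ! I (J i) \<in> Anc" unfolding Anc_def using J[OF i(1)] by blast
      then have "(x ! I (J i), \<lfloor>(x!i - A i)/\<eta>\<rfloor>) \<in> Anc \<times> {-M..M}" using fl[OF i(1)] by blast
      then show "v \<in> V" unfolding V_def i(2) rnd_def A_def by force
    qed
    obtain y where y: "length y = N" "y \<noteq> []" "\<forall>P. sts l P y = sts l P x'"
      using reduce[OF finV x'V x'ne cardV, of l] unfolding N_def by blast
    show "\<exists>y. length y = N \<and> (\<forall>z. length z = l \<longrightarrow>
                 (1 - \<epsilon>) * ddF x z \<le> ddF y z \<and> ddF y z \<le> (1 + \<epsilon>) * ddF x z)"
    proof (intro exI[of _ y] conjI allI impI)
      show "length y = N" by (rule y(1))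
      fix z :: "real list" assume lz: "length z = l"
      have zne: "z \<noteq> []" using lz assms(3) by auto
      have dy: "ddF y z = ddF x' z" using ddF_eq_sts[OF x'ne y(2) zne] y(3) lz by simp
      have p1: "ddF x' z \<le> ddF x z + \<eta>"
        using ddF_perturb[OF xne zne lx'] err unfolding m_def by blast
      have p2: "ddF x z \<le> ddF x' z + \<eta>"
        using ddF_perturb[OF x'ne zne lx'[symmetric]] err lx' unfolding m_def by (simp add: abs_minus_commute)
      have h1: "\<eta> \<le> \<epsilon> * ddF x z"
        unfolding \<eta>_def using Dle[OF lz] assms(1) by (simp add: mult_left_mono)
      have h2: "(1 - \<epsilon>) * ddF x z = ddF x z - \<epsilon> * ddF x z" by (simp add: algebra_simps)
      have h3: "(1 + \<epsilon>) * ddF x z = ddF x z + \<epsilon> * ddF x z" by (simp add: algebra_simps)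
      show "(1 - \<epsilon>) * ddF x z \<le> ddF y z" unfolding h2 dy using h1 p2 by linarith
      show "ddF y z \<le> (1 + \<epsilon>) * ddF x z" unfolding h3 dy using h1 p1 by linarith
    qed
  qed
qed

end
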